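(* For integers $n\ge1$, $\alpha\ge1$ and $a\in\mathbb{C}$, define $$R_n(a,\alpha)=\int_{[0,\infty)^n}\prod_{j=1}^n e^{-y_j}y_j(a-y_j)^{\alpha}\,\Delta_n^2(\mathbf{y})\,dy_1\cdots dy_n.$$ Then $$R_n(a,\alpha)=(-1)^{n\alpha}\prod_{j=0}^{n-1}\big((j+1)!\big)^2\prod_{j=0}^{\alpha-1}\frac{(n+j)!}{j!}\,\det\Big[L^{(j)}_{n+i-j}(a)\Big]_{i,j=1,\dots,\alpha}.$$
   Context: $\Delta_n(\mathbf{y})=\prod_{1\le i<k\le n}(y_k-y_i)$. $L^{(\rho)}_M(z)=\frac{(\rho+1)_M}{M!}\sum_{j=0}^M\frac{(-M)_j}{(\rho+1)_j}\frac{z^j}{j!}$ is the generalized Laguerre polynomial, with $(a)_k$ the Pochhammer symbol. *)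

theory Defs
  imports "HOL-Analysis.Analysis" "Jordan_Normal_Form.Determinant"
begin

definition Delta :: "nat \<Rightarrow> (nat \<Rightarrow> real) \<Rightarrow> real" where
  "Delta n y = (\<Prod>k<n. \<Prod>i<k. y k - y i)"

text \<open>Generalized Laguerre polynomial L^{(rho)}_M(z); degree M is an integer,
  with the convention L_M = 0 for M < 0.\<close>
definition laguerre :: "nat \<Rightarrow> int \<Rightarrow> complex \<Rightarrow> complex" where
  "laguerre \<rho> M z = (if M < 0 then 0 else
     let m = nat M in
     pochhammer (of_nat \<rho> + 1) m / of_nat (fact m) *
     (\<Sum>j\<le>m. pochhammer (- of_nat m) j / pochhammer (of_nat \<rho> + 1) j * z ^ j / of_nat (fact j)))"

definition R_int :: "nat \<Rightarrow> complex \<Rightarrow> nat \<Rightarrow> complex" where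
  "R_int n a \<alpha> = (LINT y : {y \<in> space (PiM {..<n} (\<lambda>_. lborel)). \<forall>j<n. 0 \<le> y j}
      | PiM {..<n} (\<lambda>_. lborel).
      (\<Prod>j<n. complex_of_real (exp (- y j) * y j) * (a - complex_of_real (y j)) ^ \<alpha>)
        * complex_of_real ((Delta n y)\<^sup>2))"

end

theory Submission imports Defs "HOL-Combinatorics.Stirling" begin


lemma fd_shift:
  "(\<Sum>t\<le>Suc M. (-1::complex)^t * of_nat (Suc M choose t) * of_nat t ^ Suc s)
   = - of_nat (Suc M) * (\<Sum>t\<le>M. (-1)^t * of_nat (M choose t) * (of_nat t + 1) ^ s)"
proof -
  have "(\<Sum>t\<le>Suc M. (-1::complex)^t * of_nat (Suc M choose t) * of_nat t ^ Suc s)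
    = (\<Sum>t\<le>M. (-1::complex)^Suc t * of_nat (Suc M choose Suc t) * of_nat (Suc t) ^ Suc s)"
    by (subst sum.atMost_Suc_shift) simp
  also have "\<dots> = (\<Sum>t\<le>M. - of_nat (Suc M) * ((-1)^t * of_nat (M choose t) * (of_nat t + 1) ^ s))"
  proof (rule sum.cong[OF refl])
    fix t
    have e: "of_nat (Suc t) * (of_nat (Suc M choose Suc t)::complex) = of_nat (Suc M) * of_nat (M choose t)"
      using Suc_times_binomial[of t M] by (metis of_nat_mult)
    have "(-1::complex)^Suc t * of_nat (Suc M choose Suc t) * of_nat (Suc t) ^ Suc s
       = - ((-1)^t * (of_nat (Suc t) * of_nat (Suc M choose Suc t)) * of_nat (Suc t) ^ s)"
      by (simp add: algebra_simps)
    also have "\<dots> = - of_nat (Suc M) * ((-1)^t * of_nat (M choose t) * (of_nat t + 1) ^ s)"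
      unfolding e by (simp add: algebra_simps)
    finally show "(-1::complex)^Suc t * of_nat (Suc M choose Suc t) * of_nat (Suc t) ^ Suc s
       = - of_nat (Suc M) * ((-1)^t * of_nat (M choose t) * (of_nat t + 1) ^ s)" .
  qed
  also have "\<dots> = - of_nat (Suc M) * (\<Sum>t\<le>M. (-1)^t * of_nat (M choose t) * (of_nat t + 1) ^ s)"
    by (simp add: sum_distrib_left)
  finally show ?thesis .
qed

lemma fin_diff:
  "s \<le> M \<Longrightarrow> (\<Sum>t\<le>M. (-1::complex)^t * of_nat (M choose t) * of_nat t ^ s)
     = (if s < M then 0 else (-1)^M * fact M)"
proof (induction M arbitrary: s)
  case 0
  then show ?case by simp
next
  case (Suc M)
  show ?case
  proof (cases s)
    case 0
    then show ?thesis using choose_alternating_sum[of "Suc M", where 'a=complex] by simp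
  next
    case (Suc s')
    with Suc.prems have s': "s' \<le> M" by simp
    have "(\<Sum>t\<le>M. (-1::complex)^t * of_nat (M choose t) * (of_nat t + 1) ^ s')
      = (\<Sum>t\<le>M. \<Sum>u\<le>s'. of_nat (s' choose u) * ((-1)^t * of_nat (M choose t) * of_nat t ^ u))"
    proof (rule sum.cong[OF refl])
      fix t
      have "(of_nat t + 1::complex)^s' = (\<Sum>u\<le>s'. of_nat (s' choose u) * of_nat t ^ u)"
        using binomial_ring[of "of_nat t::complex" 1 s'] by simp
      then show "(-1::complex)^t * of_nat (M choose t) * (of_nat t + 1) ^ s' = (\<Sum>u\<le>s'. of_nat (s' choose u) * ((-1)^t * of_nat (M choose t) * of_nat t ^ u))"
        by (simp add: sum_distrib_left algebra_simps)
    qed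
    also have "\<dots> = (\<Sum>u\<le>s'. of_nat (s' choose u) * (\<Sum>t\<le>M. (-1)^t * of_nat (M choose t) * of_nat t ^ u))"
      by (subst sum.swap) (simp add: sum_distrib_left)
    also have "\<dots> = (\<Sum>u\<le>s'. of_nat (s' choose u) * (if u < M then 0 else (-1)^M * fact M))"
      by (rule sum.cong[OF refl]) (use s' Suc.IH in auto)
    also have "\<dots> = (if s' < M then 0 else (-1)^M * fact M)"
    proof (cases "s' < M")
      case True then show ?thesis by (simp add: sum.neutral)
    next
      case False
      then have "s' = M" using s' by simp
      then have "(\<Sum>u\<le>s'. of_nat (s' choose u) * (if u < M then 0 else (-1)^M * fact M))
         = (\<Sum>u\<le>M. if u = M then (-1::complex)^M * fact M else 0)"
        by (intro sum.cong) auto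
      then show ?thesis using \<open>s' = M\<close> by simp
    qed
    finally have "(\<Sum>t\<le>M. (-1::complex)^t * of_nat (M choose t) * (of_nat t + 1) ^ s') = (if s' < M then 0 else (-1)^M * fact M)" .
    then show ?thesis unfolding Suc fd_shift using s' by (auto simp: algebra_simps)
  qed
qed

definition lcoef :: "nat \<Rightarrow> nat \<Rightarrow> nat \<Rightarrow> complex" where
  "lcoef \<rho> M j = (-1)^j * fact (M+\<rho>) / (fact (j+\<rho>) * fact (M-j) * fact j)"

definition Lp :: "nat \<Rightarrow> nat \<Rightarrow> complex poly" where
  "Lp \<rho> M = (\<Sum>j\<le>M. monom (lcoef \<rho> M j) j)"

lemma poly_Lp: "poly (Lp \<rho> M) x = (\<Sum>j\<le>M. lcoef \<rho> M j * x^j)"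
  by (simp add: Lp_def poly_sum poly_monom)

definition ell :: "complex poly \<Rightarrow> complex" where
  "ell p = (\<Sum>k\<le>degree p. coeff p k * fact (Suc k))"

lemma ell_K: assumes "degree p < K" shows "ell p = (\<Sum>k<K. coeff p k * fact (Suc k))"
proof -
  have "(\<Sum>k<K. coeff p k * fact (Suc k)) = (\<Sum>k\<le>degree p. coeff p k * fact (Suc k))"
    by (rule sum.mono_neutral_right) (use assms in \<open>auto simp: coeff_eq_0\<close>)
  then show ?thesis unfolding ell_def by simp
qed

lemma ell_add: "ell (p + q) = ell p + ell q"
proof -
  define K where "K = Suc (max (degree p) (degree q))"
  have "degree (p+q) < K" unfolding K_def using degree_add_le_max[of p q] by simp
  moreover have "degree p < K" "degree q < K" unfolding K_def by auto
  ultimately show ?thesis by (simp add: ell_K[of _ K] sum.distrib algebra_simps)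
qed

lemma ell_smult: "ell (Polynomial.smult c p) = c * ell p"
proof -
  have "degree (Polynomial.smult c p) < Suc (degree p)" "degree p < Suc (degree p)"
    using degree_smult_le[of c p] by auto
  then show ?thesis by (simp add: ell_K[of _ "Suc (degree p)"] sum_distrib_left algebra_simps)
qed

lemma ell_0[simp]: "ell 0 = 0" by (simp add: ell_def)

lemma ell_sum: "ell (\<Sum>i\<in>A. f i) = (\<Sum>i\<in>A. ell (f i))"
  by (induction A rule: infinite_finite_induct) (auto simp: ell_add)

lemma ell_monom: "ell (monom c k) = c * fact (Suc k)"
proof -
  have "degree (monom c k) < Suc k" by (meson degree_monom_le le_imp_less_Suc)
  then have "ell (monom c k) = (\<Sum>i<Suc k. coeff (monom c k) i * fact (Suc i))" by (rule ell_K)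
  also have "\<dots> = c * fact (Suc k)" by (simp add: coeff_monom sum.delta)
  finally show ?thesis .
qed

lemma poch_nat: "pochhammer (of_nat (Suc j) :: 'a::{comm_semiring_1,semiring_char_0}) k * fact j = fact (k + j)"
proof (induction k)
  case 0 then show ?case by simp
next
  case (Suc k)
  have "pochhammer (of_nat (Suc j) :: 'a) (Suc k) * fact j = (pochhammer (of_nat (Suc j)) k * fact j) * (of_nat (Suc j) + of_nat k)"
    by (simp add: pochhammer_Suc algebra_simps)
  also have "\<dots> = fact (k+j) * of_nat (Suc (k + j))" using Suc by (simp add: algebra_simps)
  also have "\<dots> = fact (Suc k + j)" by (simp add: algebra_simps)
  finally show ?case .
qed

lemma ell_Lp:
  assumes "m \<le> r"
  shows "ell (monom 1 m * Lp 1 r) = (if m < r then 0 else (-1)^r * fact (Suc r))"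
proof -
  define g where "g t = (-1::complex)^t * of_nat (Suc r choose t) * pochhammer (of_nat t) (Suc m)" for t
  have "monom 1 m * Lp 1 r = (\<Sum>j\<le>r. monom (lcoef 1 r j) (m+j))"
    by (simp add: Lp_def sum_distrib_left mult_monom)
  then have "ell (monom 1 m * Lp 1 r) = (\<Sum>j\<le>r. lcoef 1 r j * fact (Suc (m+j)))"
    by (simp add: ell_sum ell_monom)
  also have "\<dots> = (\<Sum>j\<le>r. - g (Suc j))"
  proof (rule sum.cong[OF refl])
    fix j assume "j \<in> {..r}"
    then have jr: "j \<le> r" by simp
    have b: "(of_nat (Suc r choose Suc j) :: complex) = fact (Suc r) / (fact (Suc j) * fact (r - j))"
      using binomial_fact[of "Suc j" "Suc r", where 'a=complex] jr by simp
    have p: "pochhammer (of_nat (Suc j) :: complex) (Suc m) = fact (Suc m + j) / fact j"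
      using poch_nat[of j "Suc m", where 'a=complex] by (simp add: field_simps)
    have e: "r + 1 = Suc r" "j + 1 = Suc j" "Suc m + j = Suc (m+j)" by auto
      show "lcoef 1 r j * fact (Suc (m+j)) = - g (Suc j)"
      unfolding g_def b p lcoef_def e by (simp add: field_simps del: fact_Suc)
  qed
  also have "\<dots> = - (\<Sum>t\<le>Suc r. g t)"
    by (subst sum.atMost_Suc_shift) (simp add: g_def pochhammer_0_left sum_negf)
  also have "(\<Sum>t\<le>Suc r. g t) = (\<Sum>t\<le>Suc r. \<Sum>s\<le>Suc m. of_nat (stirling (Suc m) s) *
        ((-1)^t * of_nat (Suc r choose t) * of_nat t ^ s))"
    unfolding g_def stirling_pochhammer[symmetric] by (simp add: sum_distrib_left algebra_simps)
  also have "\<dots> = (\<Sum>s\<le>Suc m. of_nat (stirling (Suc m) s) *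
        (\<Sum>t\<le>Suc r. (-1)^t * of_nat (Suc r choose t) * of_nat t ^ s))"
    unfolding sum_distrib_left by (rule sum.swap)
  also have "\<dots> = (\<Sum>s\<le>Suc m. of_nat (stirling (Suc m) s) * (if s < Suc r then 0 else (-1)^Suc r * fact (Suc r)))"
  proof (rule sum.cong[OF refl])
    fix s assume "s \<in> {..Suc m}"
    then have "s \<le> Suc r" using assms by auto
    then show "of_nat (stirling (Suc m) s) * (\<Sum>t\<le>Suc r. (-1)^t * of_nat (Suc r choose t) * of_nat t ^ s) = of_nat (stirling (Suc m) s) * (if s < Suc r then 0 else (-1::complex)^Suc r * fact (Suc r))"
      by (simp only: fin_diff)
  qed
  also have "\<dots> = (if m < r then 0 else (-1)^Suc r * fact (Suc r))"
  proof (cases "m < r")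
    case True then show ?thesis by (simp add: sum.neutral)
  next
    case False
    then have "m = r" using assms by simp
    then have "(\<Sum>s\<le>Suc m. of_nat (stirling (Suc m) s) * (if s < Suc r then 0 else (-1::complex)^Suc r * fact (Suc r)))
         = (\<Sum>s\<le>Suc m. if s = Suc m then (-1::complex)^Suc r * fact (Suc r) else 0)"
      by (intro sum.cong) auto
    then show ?thesis using \<open>m = r\<close> by simp
  qed
  finally show ?thesis by auto
qed

lemma poch_neg: "j \<le> m \<Longrightarrow> pochhammer (- of_nat m :: complex) j * fact (m - j) = (-1)^j * fact m"
proof (induction j)
  case 0 then show ?case by simp
next
  case (Suc j)
  then have jm: "j < m" by simp
  have f: "(fact (m - j) :: complex) = of_nat (m - j) * fact (m - Suc j)"
    using jm by (metis Suc_diff_Suc fact_Suc)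
  have "pochhammer (- of_nat m :: complex) (Suc j) * fact (m - Suc j)
     = - (pochhammer (- of_nat m) j * (of_nat (m - j) * fact (m - Suc j)))"
    using jm by (simp add: pochhammer_Suc of_nat_diff algebra_simps)
  also have "\<dots> = (-1)^Suc j * fact m" using Suc jm f by simp
  finally show ?case .
qed

lemma laguerre_Lp: "laguerre \<rho> (int M) z = poly (Lp \<rho> M) z"
proof -
  have pr: "pochhammer (of_nat \<rho> + 1 :: complex) k = fact (k + \<rho>) / fact \<rho>" for k
    using poch_nat[of \<rho> k, where 'a=complex] by (simp add: field_simps)
  have "laguerre \<rho> (int M) z = pochhammer (of_nat \<rho> + 1) M / of_nat (fact M) *
     (\<Sum>j\<le>M. pochhammer (- of_nat M) j / pochhammer (of_nat \<rho> + 1) j * z ^ j / of_nat (fact j))"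
    unfolding laguerre_def by simp
  also have "\<dots> = (\<Sum>j\<le>M. lcoef \<rho> M j * z^j)"
    unfolding sum_distrib_left
  proof (rule sum.cong[OF refl])
    fix j assume "j \<in> {..M}"
    then have jM: "j \<le> M" by simp
    have q: "pochhammer (- of_nat M :: complex) j = (-1)^j * fact M / fact (M - j)"
      using poch_neg[OF jM] by (simp add: field_simps)
    show "pochhammer (of_nat \<rho> + 1) M / of_nat (fact M) *
        (pochhammer (- of_nat M) j / pochhammer (of_nat \<rho> + 1) j * z ^ j / of_nat (fact j)) =
        lcoef \<rho> M j * z ^ j"
      unfolding pr q lcoef_def by (simp add: field_simps add.commute)
  qed
  finally show ?thesis by (simp add: poly_Lp)
qed

definition tc :: "complex \<Rightarrow> nat \<Rightarrow> nat \<Rightarrow> complex" where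
  "tc a M k = (-1)^k * poly (Lp (Suc k) (M - k)) a / fact k"

lemma Lp_taylor: "Lp 1 M = (\<Sum>k\<le>M. Polynomial.smult (tc a M k) ([:-a,1:]^k))"
proof -
  have key: "poly (Lp 1 M) (t + a) = (\<Sum>k\<le>M. tc a M k * t^k)" for t
  proof -
    define G where "G k i = lcoef 1 M (k+i) * of_nat ((k+i) choose k) * t^k * a^i" for k i
    have "poly (Lp 1 M) (t + a) = (\<Sum>j\<le>M. \<Sum>k\<le>j. G k (j - k))"
      unfolding poly_Lp
    proof (rule sum.cong[OF refl])
      fix j assume "j \<in> {..M}"
      have "(t+a)^j = (\<Sum>k\<le>j. of_nat (j choose k) * t^k * a^(j-k))" by (rule binomial_ring)
      then show "lcoef 1 M j * (t + a) ^ j = (\<Sum>k\<le>j. G k (j - k))"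
        unfolding G_def by (simp add: sum_distrib_left algebra_simps)
    qed
    also have "\<dots> = (\<Sum>(k,i)\<in>{(k,i). k + i \<le> M}. G k i)"
      by (rule sum.triangle_reindex_eq[symmetric])
    also have "{(k,i). k + i \<le> M} = Sigma {..M} (\<lambda>k. {..M-k})" by auto
    also have "(\<Sum>(k,i)\<in>Sigma {..M} (\<lambda>k. {..M-k}). G k i) = (\<Sum>k\<le>M. \<Sum>i\<le>M-k. G k i)"
      by (rule sum.Sigma[symmetric]) auto
    also have "\<dots> = (\<Sum>k\<le>M. tc a M k * t^k)"
    proof (rule sum.cong[OF refl])
      fix k assume "k \<in> {..M}"
      then have kM: "k \<le> M" by simp
      have "tc a M k * t^k = (\<Sum>i\<le>M-k. (-1)^k / fact k * lcoef (Suc k) (M-k) i * a^i * t^k)"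
        unfolding tc_def poly_Lp by (simp add: sum_distrib_left sum_distrib_right sum_divide_distrib algebra_simps)
      also have "\<dots> = (\<Sum>i\<le>M-k. G k i)"
      proof (rule sum.cong[OF refl])
        fix i assume "i \<in> {..M-k}"
        then have ik: "k + i \<le> M" using kM by simp
        have b: "(of_nat ((k+i) choose k) :: complex) = fact (k+i) / (fact k * fact i)"
          using binomial_fact[of k "k+i", where 'a=complex] by simp
        have e1: "M - k + Suc k = Suc M" "i + Suc k = Suc (k+i)" "M - k - i = M - (k+i)"
          "M + 1 = Suc M" "k + i + 1 = Suc (k+i)"
          using ik by auto
        show "(-1)^k / fact k * lcoef (Suc k) (M-k) i * a^i * t^k = G k i"
          unfolding G_def b lcoef_def e1 by (simp add: field_simps power_add del: fact_Suc)
      qed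
      finally show "(\<Sum>i\<le>M-k. G k i) = tc a M k * t^k" by simp
    qed
    finally show ?thesis .
  qed
  then have "poly (Lp 1 M) x = poly (\<Sum>k\<le>M. Polynomial.smult (tc a M k) ([:-a,1:]^k)) x" for x
    using key[of "x - a"] by (simp add: poly_sum)
  then show ?thesis by (intro poly_eq_poly_eq_iff[THEN iffD1]) auto
qed

lemma smult_sum_right: "Polynomial.smult c (\<Sum>i\<in>A. f i) = (\<Sum>i\<in>A. Polynomial.smult c (f i))"
  by (induction A rule: infinite_finite_induct) (auto simp: smult_add_right)

lemma one_plus_of_nat_ne0 [simp]: "(1 + of_nat r :: complex) \<noteq> 0"
  by (metis of_nat_Suc of_nat_eq_0_iff add.commute Zero_not_Suc)

definition P :: "nat \<Rightarrow> complex poly" where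
  "P r = Polynomial.smult ((-1)^r * fact r) (Lp 1 r)"

lemma coeff_Lp: "coeff (Lp \<rho> M) k = (if k \<le> M then lcoef \<rho> M k else 0)"
  by (simp add: Lp_def coeff_sum coeff_monom)

lemma degree_Lp: "degree (Lp \<rho> M) \<le> M"
  by (rule degree_le) (simp add: coeff_Lp)

lemma degree_P: "degree (P r) \<le> r"
  unfolding P_def using degree_Lp degree_smult_le order.trans by blast

lemma coeff_P_top: "coeff (P r) r = 1"
  by (simp add: P_def coeff_Lp lcoef_def)

lemma ell_XP: "m \<le> r \<Longrightarrow> ell (monom 1 m * P r) = (if m < r then 0 else fact r * fact (Suc r))"
proof -
  assume mr: "m \<le> r"
  have "ell (monom 1 m * P r) = (-1)^r * fact r * ell (monom 1 m * Lp 1 r)"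
    unfolding P_def by (simp add: ell_smult mult_smult_right)
  also have "\<dots> = (if m < r then 0 else fact r * fact (Suc r))"
    using ell_Lp[OF mr] by (auto simp: power_mult_distrib[symmetric])
  finally show ?thesis .
qed

lemma P_sum_monoms: "P i = (\<Sum>m\<le>i. monom (coeff (P i) m) m)"
  using poly_as_sum_of_monoms'[OF degree_P] by simp

lemma orth_le: "i \<le> r \<Longrightarrow> ell (P i * P r) = (if i = r then fact i * fact (Suc i) else 0)"
proof -
  assume ir: "i \<le> r"
  have "P i * P r = (\<Sum>m\<le>i. Polynomial.smult (coeff (P i) m) (monom 1 m * P r))"
  proof -
    have mc: "monom c m = Polynomial.smult c (monom 1 m)" for c :: complex and m by (simp add: smult_monom)
    show ?thesis by (subst P_sum_monoms) (simp add: sum_distrib_right mc[of "coeff (P i) _"] mult_smult_left)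
  qed
  then have "ell (P i * P r) = (\<Sum>m\<le>i. coeff (P i) m * ell (monom 1 m * P r))"
    by (simp add: ell_sum ell_smult)
  also have "\<dots> = (\<Sum>m\<le>i. if m = r then fact r * fact (Suc r) else 0)"
    using ir by (intro sum.cong refl) (auto simp: ell_XP coeff_P_top)
  also have "\<dots> = (if i = r then fact i * fact (Suc i) else 0)"
    using ir by auto
  finally show ?thesis .
qed

lemma orth: "ell (P i * P r) = (if i = r then fact i * fact (Suc i) else 0)"
proof (cases "i \<le> r")
  case True then show ?thesis by (rule orth_le)
next
  case False
  then have "ell (P r * P i) = 0" using orth_le[of r i] by auto
  then show ?thesis using False by (simp add: mult.commute)
qed

definition Sm :: "complex \<Rightarrow> nat \<Rightarrow> nat \<Rightarrow> complex" where
  "Sm a r k = (if k \<le> r then (-1)^r * fact r * tc a r k else 0)"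

lemma P_taylor: "r < N \<Longrightarrow> P r = (\<Sum>k<N. Polynomial.smult (Sm a r k) ([:-a,1:]^k))"
proof -
  assume rN: "r < N"
  have "P r = (\<Sum>k\<le>r. Polynomial.smult (Sm a r k) ([:-a,1:]^k))"
    unfolding P_def Lp_taylor[of r a] by (simp add: smult_sum_right Sm_def)
  also have "\<dots> = (\<Sum>k<N. Polynomial.smult (Sm a r k) ([:-a,1:]^k))"
    by (rule sum.mono_neutral_left) (use rN in \<open>auto simp: Sm_def\<close>)
  finally show ?thesis .
qed

lemma Sm_diag: "Sm a r r = 1"
  by (simp add: Sm_def tc_def poly_Lp lcoef_def)

lemma Sm_laguerre: "Sm a r k = (-1)^r * fact r * ((-1)^k * laguerre (Suc k) (int r - int k) a / fact k)"
proof (cases "k \<le> r")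
  case True
  then have "laguerre (Suc k) (int r - int k) a = poly (Lp (Suc k) (r-k)) a"
    using laguerre_Lp[of "Suc k" "r - k" a] by (metis of_nat_diff)
  then show ?thesis using True by (simp add: Sm_def tc_def)
next
  case False
  then show ?thesis by (simp add: Sm_def laguerre_def)
qed



lemma mult_entry:
  assumes "A \<in> carrier_mat k N" "B \<in> carrier_mat N m" "i < k" "j < m"
  shows "(A * B) $$ (i,j) = (\<Sum>r<N. A $$ (i,r) * B $$ (r,j))"
  using assms by (simp add: scalar_prod_def atLeast0LessThan)

lemma jacobi_block:
  fixes S T :: "complex mat"
  assumes S: "S \<in> carrier_mat (n+\<alpha>) (n+\<alpha>)" and T: "T \<in> carrier_mat (n+\<alpha>) (n+\<alpha>)"
    and TS: "T * S = 1\<^sub>m (n+\<alpha>)" and dS: "Determinant.det S = 1"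
  shows "Determinant.det (Matrix.mat n n (\<lambda>(i,j). T $$ (i+\<alpha>, j)))
       = (-1)^(n*\<alpha>) * Determinant.det (Matrix.mat \<alpha> \<alpha> (\<lambda>(i,j). S $$ (n+i, j)))"
proof -
  define N where "N = n + \<alpha>"
  have dT: "Determinant.det T = 1"
    using det_mult[OF T S] TS dS by simp
  define Y where "Y = Matrix.mat N N (\<lambda>(r,c). if c < n then (if r = c then 1 else 0) else S $$ (r, c-n))"
  define SB where "SB = Matrix.mat \<alpha> \<alpha> (\<lambda>(i,j). S $$ (n+i, j))"
  define TB where "TB = Matrix.mat n n (\<lambda>(i,j). T $$ (i+\<alpha>, j))"
  have Yb: "Y = four_block_mat (1\<^sub>m n) (Matrix.mat n \<alpha> (\<lambda>(r,c). S $$ (r,c))) (0\<^sub>m \<alpha> n) SB"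
    by (rule eq_matI) (auto simp: Y_def SB_def N_def)
  have dY: "Determinant.det Y = Determinant.det SB"
    unfolding Yb by (subst det_four_block_mat_lower_left_zero[of _ n _ \<alpha>]) (auto simp: SB_def)
  define Z where "Z = Matrix.mat N N (\<lambda>(k,c). if c < n then T $$ (k,c) else (if k = c - n then 1 else 0))"
  have Yc: "Y \<in> carrier_mat N N" by (simp add: Y_def)
  have TN: "T \<in> carrier_mat N N" "S \<in> carrier_mat N N" using T S N_def by auto
  have TY: "T * Y = Z"
  proof (rule eq_matI)
    fix k c assume kc: "k < dim_row Z" "c < dim_col Z"
    then have k: "k < N" and c: "c < N" by (auto simp: Z_def)
    have e: "(T * Y) $$ (k,c) = (\<Sum>r<N. T $$ (k,r) * Y $$ (r,c))"
      by (rule mult_entry[OF TN(1) Yc k c])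
    show "(T * Y) $$ (k,c) = Z $$ (k,c)"
    proof (cases "c < n")
      case True
      then have "(\<Sum>r<N. T $$ (k,r) * Y $$ (r,c)) = (\<Sum>r<N. if r = c then T $$ (k,c) else 0)"
        by (intro sum.cong refl) (use c in \<open>auto simp: Y_def\<close>)
      then show ?thesis using e True c k by (simp add: Z_def)
    next
      case False
      then have cn: "c - n < N" using c by (simp add: N_def)
      have "(\<Sum>r<N. T $$ (k,r) * Y $$ (r,c)) = (\<Sum>r<N. T $$ (k,r) * S $$ (r,c-n))"
        by (intro sum.cong refl) (use False c in \<open>auto simp: Y_def\<close>)
      also have "\<dots> = (T * S) $$ (k, c-n)" by (rule mult_entry[symmetric, OF TN k cn])
      also have "\<dots> = (if k = c - n then 1 else 0)" using TS k cn by (simp add: N_def)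
      finally show ?thesis using e False c k by (simp add: Z_def)
    qed
  qed (use TN in \<open>auto simp: Z_def Y_def\<close>)
  have dZ: "Determinant.det Z = Determinant.det SB"
    using det_mult[OF TN(1) Yc] TY dT dY by simp
  have Zc: "Z \<in> carrier_mat N N" by (simp add: Z_def)
  have sw: "Determinant.det Z = (-1)^(n*\<alpha>) * Determinant.det (Matrix.mat N N (\<lambda>(i, j). Z $$ (i, if j < \<alpha> then j + n else if j < n + \<alpha> then j - \<alpha> else j)))"
    by (rule det_swap_initial_cols[OF Zc]) (simp add: N_def)
  have Z2: "Matrix.mat N N (\<lambda>(i, j). Z $$ (i, if j < \<alpha> then j + n else if j < n + \<alpha> then j - \<alpha> else j))
      = four_block_mat (1\<^sub>m \<alpha>) (Matrix.mat \<alpha> n (\<lambda>(i,j). T $$ (i,j))) (0\<^sub>m n \<alpha>) TB"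
    by (rule eq_matI) (auto simp: Z_def TB_def N_def)
  have dZ2: "Determinant.det (four_block_mat (1\<^sub>m \<alpha>) (Matrix.mat \<alpha> n (\<lambda>(i,j). T $$ (i,j))) (0\<^sub>m n \<alpha>) TB) = Determinant.det TB"
    by (subst det_four_block_mat_lower_left_zero[of _ \<alpha> _ n]) (auto simp: TB_def)
  have "(-1)^(n*\<alpha>) * Determinant.det TB = Determinant.det SB" using sw Z2 dZ2 dZ by simp
  then have "(-1)^(n*\<alpha>) * ((-1)^(n*\<alpha>) * Determinant.det TB) = (-1)^(n*\<alpha>) * Determinant.det SB" by simp
  then show ?thesis unfolding TB_def SB_def by (simp add: power_mult_distrib[symmetric] flip: power_add mult_2)
qed

lemma sign_sq: "(of_int (sign p) :: 'a::ring_1) * of_int (sign p) = 1"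
  by (simp add: sign_def)

lemma det_entries:
  "Determinant.det (Matrix.mat n n (\<lambda>(i,j). g i j)) = (\<Sum>\<pi>\<in>{p. p permutes {0..<n}}. of_int (sign \<pi>) * (\<Prod>i\<in>{0..<n}. g i (\<pi> i)))"
proof -
  have "Determinant.det (Matrix.mat n n (\<lambda>(i,j). g i j)) = (\<Sum>\<pi>\<in>{p. p permutes {0..<n}}. of_int (sign \<pi>) * (\<Prod>i\<in>{0..<n}. Matrix.mat n n (\<lambda>(i,j). g i j) $$ (i, \<pi> i)))"
    by (rule det_def') simp
  also have "\<dots> = (\<Sum>\<pi>\<in>{p. p permutes {0..<n}}. of_int (sign \<pi>) * (\<Prod>i\<in>{0..<n}. g i (\<pi> i)))"
    by (intro sum.cong refl arg_cong2[where f="(*)"] prod.cong) (auto simp: permutes_in_image)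
  finally show ?thesis .
qed

lemma heine:
  fixes f :: "nat \<Rightarrow> 'a::comm_ring_1"
  shows "(\<Sum>\<sigma>\<in>{p. p permutes {0..<n}}. \<Sum>\<tau>\<in>{p. p permutes {0..<n}}.
      of_int (sign \<sigma>) * of_int (sign \<tau>) * (\<Prod>k\<in>{0..<n}. f (\<sigma> k + \<tau> k)))
    = of_nat (fact n) * Determinant.det (Matrix.mat n n (\<lambda>(i,j). f (i+j)))"
proof -
  let ?U = "{0..<n}"
  let ?D = "Determinant.det (Matrix.mat n n (\<lambda>(i,j). f (i+j)))"
  have inner: "(\<Sum>\<tau>\<in>{p. p permutes ?U}. of_int (sign \<sigma>) * of_int (sign \<tau>) * (\<Prod>k\<in>?U. f (\<sigma> k + \<tau> k))) = ?D"
    if \<sigma>: "\<sigma> permutes ?U" for \<sigma>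
  proof -
    have "(\<Sum>\<tau>\<in>{p. p permutes ?U}. of_int (sign \<sigma>) * of_int (sign \<tau>) * (\<Prod>k\<in>?U. f (\<sigma> k + \<tau> k)))
      = (\<Sum>\<pi>\<in>{p. p permutes ?U}. of_int (sign \<sigma>) * of_int (sign (\<pi> \<circ> \<sigma>)) * (\<Prod>k\<in>?U. f (\<sigma> k + (\<pi> \<circ> \<sigma>) k)))"
      by (rule sum_permutations_compose_right[OF \<sigma>])
    also have "\<dots> = (\<Sum>\<pi>\<in>{p. p permutes ?U}. of_int (sign \<pi>) * (\<Prod>i\<in>?U. f (i + \<pi> i)))"
    proof (rule sum.cong[OF refl])
      fix \<pi> assume "\<pi> \<in> {p. p permutes ?U}"
      then have \<pi>: "\<pi> permutes ?U" by simp
      have s: "(of_int (sign (\<pi> \<circ> \<sigma>)) :: 'a) = of_int (sign \<pi>) * of_int (sign \<sigma>)"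
        by (rule signof_compose[OF \<pi> \<sigma>])
      have p: "(\<Prod>k\<in>?U. f (\<sigma> k + (\<pi> \<circ> \<sigma>) k)) = (\<Prod>i\<in>?U. f (i + \<pi> i))"
        using prod.permute[OF \<sigma>, of "\<lambda>i. f (i + \<pi> i)"] by (simp add: o_def)
      show "of_int (sign \<sigma>) * of_int (sign (\<pi> \<circ> \<sigma>)) * (\<Prod>k\<in>?U. f (\<sigma> k + (\<pi> \<circ> \<sigma>) k)) =
         of_int (sign \<pi>) * (\<Prod>i\<in>?U. f (i + \<pi> i))"
        unfolding s p using sign_sq[of \<sigma>, where 'a='a] by (simp add: algebra_simps)
    qed
    also have "\<dots> = ?D" by (rule det_entries[symmetric])
    finally show ?thesis .
  qed
  have "(\<Sum>\<sigma>\<in>{p. p permutes ?U}. \<Sum>\<tau>\<in>{p. p permutes ?U}.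
      of_int (sign \<sigma>) * of_int (sign \<tau>) * (\<Prod>k\<in>?U. f (\<sigma> k + \<tau> k))) = (\<Sum>\<sigma>\<in>{p. p permutes ?U}. ?D)"
    by (rule sum.cong[OF refl]) (use inner in auto)
  also have "\<dots> = of_nat (card {p. p permutes ?U}) * ?D" by simp
  also have "card {p. p permutes ?U} = fact n" by (rule card_permutations) auto
  finally show ?thesis .
qed

lemma det_scale:
  fixes g :: "nat \<Rightarrow> nat \<Rightarrow> 'a::comm_ring_1"
  shows "Determinant.det (Matrix.mat n n (\<lambda>(i,j). c i * d j * g i j))
    = (\<Prod>i<n. c i) * (\<Prod>j<n. d j) * Determinant.det (Matrix.mat n n (\<lambda>(i,j). g i j))"
proof -
  let ?U = "{0..<n}"
  have "Determinant.det (Matrix.mat n n (\<lambda>(i,j). c i * d j * g i j))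
    = (\<Sum>\<pi>\<in>{p. p permutes ?U}. of_int (sign \<pi>) * (\<Prod>i\<in>?U. c i * d (\<pi> i) * g i (\<pi> i)))"
    by (rule det_entries)
  also have "\<dots> = (\<Sum>\<pi>\<in>{p. p permutes ?U}. (\<Prod>i<n. c i) * (\<Prod>j<n. d j) * (of_int (sign \<pi>) * (\<Prod>i\<in>?U. g i (\<pi> i))))"
  proof (rule sum.cong[OF refl])
    fix \<pi> assume "\<pi> \<in> {p. p permutes ?U}"
    then have \<pi>: "\<pi> permutes ?U" by simp
    have "(\<Prod>i\<in>?U. d (\<pi> i)) = (\<Prod>j\<in>?U. d j)"
      using prod.permute[OF \<pi>, of d] by (simp add: o_def)
    then show "of_int (sign \<pi>) * (\<Prod>i\<in>?U. c i * d (\<pi> i) * g i (\<pi> i)) =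
      (\<Prod>i<n. c i) * (\<Prod>j<n. d j) * (of_int (sign \<pi>) * (\<Prod>i\<in>?U. g i (\<pi> i)))"
      by (simp add: prod.distrib atLeast0LessThan algebra_simps)
  qed
  also have "\<dots> = (\<Prod>i<n. c i) * (\<Prod>j<n. d j) * Determinant.det (Matrix.mat n n (\<lambda>(i,j). g i j))"
    by (simp add: det_entries sum_distrib_left)
  finally show ?thesis .
qed

lemma Delta_Suc: "Delta (Suc n) y = (\<Prod>k<n. y (Suc k) - y 0) * Delta n (\<lambda>i. y (Suc i))"
proof -
  have "Delta (Suc n) y = (\<Prod>k<n. \<Prod>i<Suc k. y (Suc k) - y i)"
    unfolding Delta_def by (subst prod.lessThan_Suc_shift) simp
  also have "\<dots> = (\<Prod>k<n. (y (Suc k) - y 0) * (\<Prod>i<k. y (Suc k) - y (Suc i)))"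
    by (subst prod.lessThan_Suc_shift) simp
  finally show ?thesis by (simp add: prod.distrib Delta_def)
qed

lemma vandermonde: "Determinant.det (Matrix.mat n n (\<lambda>(k,i). y k ^ i)) = Delta n y"
proof (induction n arbitrary: y)
  case 0
  then show ?case by (simp add: Delta_def det_def')
next
  case (Suc n)
  let ?N = "Suc n"
  define V where "V = Matrix.mat ?N ?N (\<lambda>(k,i). y k ^ i)"
  define E where "E = Matrix.mat ?N ?N (\<lambda>(r,c). if r = c then 1 else if Suc r = c then - y 0 else 0)"
  define D where "D = Matrix.mat n n (\<lambda>(k,c). (y (Suc k) - y 0) * 1 * y (Suc k) ^ c)"
  have Vc: "V \<in> carrier_mat ?N ?N" and Ec: "E \<in> carrier_mat ?N ?N" by (auto simp: V_def E_def)
  have dE: "Determinant.det E = 1"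
  proof -
    have "upper_triangular E" by (auto simp: upper_triangular_def E_def)
    then have "Determinant.det E = prod_list (diag_mat E)" by (rule det_upper_triangular[OF _ Ec])
    also have "\<dots> = 1" by (simp add: prod_list_diag_prod E_def)
    finally show ?thesis .
  qed
  have VE: "V * E = four_block_mat (1\<^sub>m 1) (0\<^sub>m 1 n) (Matrix.mat n 1 (\<lambda>_. 1)) D"
  proof (rule eq_matI)
    fix k c assume "k < dim_row (four_block_mat (1\<^sub>m 1) (0\<^sub>m 1 n) (Matrix.mat n 1 (\<lambda>_. 1)) D)"
      "c < dim_col (four_block_mat (1\<^sub>m 1) (0\<^sub>m 1 n) (Matrix.mat n 1 (\<lambda>_. 1)) D)"
    then have k: "k < ?N" and c: "c < ?N" by (auto simp: D_def)
    have "(V * E) $$ (k,c) = (\<Sum>r<?N. V $$ (k,r) * E $$ (r,c))" by (rule mult_entry[OF Vc Ec k c])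
    also have "\<dots> = (\<Sum>r<?N. (if r = c then y k ^ r else 0) + (if Suc r = c then - y 0 * y k ^ r else 0))"
      by (intro sum.cong refl) (use c k in \<open>auto simp: V_def E_def\<close>)
    also have "\<dots> = y k ^ c + (if c = 0 then 0 else - y 0 * y k ^ (c - 1))"
    proof -
      have "(\<Sum>r<?N. (if Suc r = c then - y 0 * y k ^ r else 0)) = (if c = 0 then 0 else - y 0 * y k ^ (c - 1))"
      proof (cases c)
        case 0 then show ?thesis by simp
      next
        case (Suc c')
        then have "(\<Sum>r<?N. (if Suc r = c then - y 0 * y k ^ r else 0)) = (\<Sum>r<?N. (if r = c' then - y 0 * y k ^ r else 0))"
          by (intro sum.cong) auto
        then show ?thesis using Suc c by simp
      qed
      then show ?thesis using c by (simp add: sum.distrib)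
    qed
    also have "\<dots> = four_block_mat (1\<^sub>m 1) (0\<^sub>m 1 n) (Matrix.mat n 1 (\<lambda>_. 1)) D $$ (k,c)"
    proof (cases c)
      case 0 then show ?thesis using k by (auto simp: D_def)
    next
      case (Suc c')
      then show ?thesis using k c
        by (cases k) (auto simp: D_def algebra_simps)
    qed
    finally show "(V * E) $$ (k,c) = four_block_mat (1\<^sub>m 1) (0\<^sub>m 1 n) (Matrix.mat n 1 (\<lambda>_. 1)) D $$ (k,c)" .
  qed (auto simp: V_def E_def D_def)
  have "Determinant.det V = Determinant.det (V * E)" using det_mult[OF Vc Ec] dE by simp
  also have "\<dots> = Determinant.det (1\<^sub>m 1 :: real mat) * Determinant.det D"
    unfolding VE by (rule det_four_block_mat_upper_right_zero) (auto simp: D_def)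
  also have "Determinant.det D = (\<Prod>k<n. y (Suc k) - y 0) * (\<Prod>j<n. 1) * Determinant.det (Matrix.mat n n (\<lambda>(k,c). y (Suc k) ^ c))"
    unfolding D_def by (rule det_scale)
  also have "Determinant.det (Matrix.mat n n (\<lambda>(k,c). y (Suc k) ^ c)) = Delta n (\<lambda>i. y (Suc i))"
    by (rule Suc.IH)
  finally show ?case by (simp add: V_def Delta_Suc)
qed

lemma sum_monoms_lt: "degree p < n \<Longrightarrow> p = (\<Sum>m<n. monom (coeff p m) m)"
  by (rule poly_eqI) (auto simp: coeff_sum coeff_monom coeff_eq_0)

lemma ell_lin_left: "degree p < n \<Longrightarrow> ell (p * q) = (\<Sum>m<n. coeff p m * ell (monom 1 m * q))"
proof -
  assume "degree p < n"
  then have "p * q = (\<Sum>m<n. Polynomial.smult (coeff p m) (monom 1 m * q))"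
  proof -
    have mc: "monom c m = Polynomial.smult c (monom 1 m)" for c :: complex and m by (simp add: smult_monom)
    show ?thesis using \<open>degree p < n\<close> by (subst sum_monoms_lt, assumption) (simp add: sum_distrib_right mc[of "coeff p _"] mult_smult_left)
  qed
  then show ?thesis by (simp add: ell_sum ell_smult)
qed

lemma left_transform:
  assumes "\<And>i. i < n \<Longrightarrow> degree (p i) < n"
  shows "Matrix.mat n n (\<lambda>(i,m). coeff (p i) m) * Matrix.mat n n (\<lambda>(m,j). ell (monom 1 m * q j))
    = Matrix.mat n n (\<lambda>(i,j). ell (p i * q j))"
proof (rule eq_matI)
  fix i j assume "i < dim_row (Matrix.mat n n (\<lambda>(i,j). ell (p i * q j)))" "j < dim_col (Matrix.mat n n (\<lambda>(i,j). ell (p i * q j)))"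
  then have i: "i < n" and j: "j < n" by auto
  have "(Matrix.mat n n (\<lambda>(i,m). coeff (p i) m) * Matrix.mat n n (\<lambda>(m,j). ell (monom 1 m * q j))) $$ (i,j)
    = (\<Sum>m<n. coeff (p i) m * ell (monom 1 m * q j))"
    by (subst mult_entry[of _ n n _ n]) (use i j in auto)
  also have "\<dots> = ell (p i * q j)" using ell_lin_left[OF assms[OF i]] by simp
  finally show "(Matrix.mat n n (\<lambda>(i,m). coeff (p i) m) * Matrix.mat n n (\<lambda>(m,j). ell (monom 1 m * q j))) $$ (i,j)
    = Matrix.mat n n (\<lambda>(i,j). ell (p i * q j)) $$ (i,j)" using i j by simp
qed auto

lemma right_transform:
  assumes "\<And>i. i < n \<Longrightarrow> degree (p i) < n"
  shows "Matrix.mat n n (\<lambda>(i,m). ell (q i * monom 1 m)) * Matrix.mat n n (\<lambda>(m,j). coeff (p j) m)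
    = Matrix.mat n n (\<lambda>(i,j). ell (q i * p j))"
proof (rule eq_matI)
  fix i j assume "i < dim_row (Matrix.mat n n (\<lambda>(i,j). ell (q i * p j)))" "j < dim_col (Matrix.mat n n (\<lambda>(i,j). ell (q i * p j)))"
  then have i: "i < n" and j: "j < n" by auto
  have "(Matrix.mat n n (\<lambda>(i,m). ell (q i * monom 1 m)) * Matrix.mat n n (\<lambda>(m,j). coeff (p j) m)) $$ (i,j)
    = (\<Sum>m<n. ell (q i * monom 1 m) * coeff (p j) m)"
    by (subst mult_entry[of _ n n _ n]) (use i j in auto)
  also have "\<dots> = ell (p j * q i)" using ell_lin_left[OF assms[OF j], of "q i"] by (simp add: mult.commute)
  finally show "(Matrix.mat n n (\<lambda>(i,m). ell (q i * monom 1 m)) * Matrix.mat n n (\<lambda>(m,j). coeff (p j) m)) $$ (i,j)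
    = Matrix.mat n n (\<lambda>(i,j). ell (q i * p j)) $$ (i,j)" using i j by (simp add: mult.commute)
qed auto

lemma det_coeff_mat:
  assumes "\<And>i. i < n \<Longrightarrow> degree (p i) \<le> i" "\<And>i. i < n \<Longrightarrow> coeff (p i) i = 1"
  shows "Determinant.det (Matrix.mat n n (\<lambda>(i,m). coeff (p i) m)) = 1"
proof -
  have "Determinant.det (Matrix.mat n n (\<lambda>(i,m). coeff (p i) m)) = prod_list (diag_mat (Matrix.mat n n (\<lambda>(i,m). coeff (p i) m)))"
  proof (rule det_lower_triangular[of n])
    fix i j :: nat assume ij: "i < j" "j < n"
    then have "degree (p i) < j" using assms(1)[of i] by simp
    then show "Matrix.mat n n (\<lambda>(i,m). coeff (p i) m) $$ (i,j) = 0" using ij by (simp add: coeff_eq_0)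
  qed simp
  also have "\<dots> = 1" by (simp add: prod_list_diag_prod assms(2))
  finally show ?thesis .
qed

lemma det_coeff_mat_T:
  assumes "\<And>i. i < n \<Longrightarrow> degree (p i) \<le> i" "\<And>i. i < n \<Longrightarrow> coeff (p i) i = 1"
  shows "Determinant.det (Matrix.mat n n (\<lambda>(m,j). coeff (p j) m)) = 1"
proof -
  have "Matrix.mat n n (\<lambda>(m,j). coeff (p j) m) = transpose_mat (Matrix.mat n n (\<lambda>(i,m). coeff (p i) m))"
    by (rule eq_matI) auto
  moreover have "Determinant.det (transpose_mat (Matrix.mat n n (\<lambda>(i,m). coeff (p i) m))) = Determinant.det (Matrix.mat n n (\<lambda>(i,m). coeff (p i) m))"
    by (rule det_transpose[of _ n]) auto
  ultimately show ?thesis using det_coeff_mat[OF assms] by simp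
qed



definition mu :: "complex \<Rightarrow> nat \<Rightarrow> nat \<Rightarrow> complex" where
  "mu a \<alpha> m = ell (monom 1 m * [:a, -1:]^\<alpha>)"

lemma fact_prod_sq: "of_nat (fact n) * (\<Prod>i<n. fact i * fact (Suc i)) = (\<Prod>j<n. (of_nat (fact (j+1)))\<^sup>2 :: complex)"
proof (induction n)
  case 0 then show ?case by simp
next
  case (Suc n)
  have "of_nat (fact (Suc n)) * (\<Prod>i<Suc n. fact i * fact (Suc i)) =
      (of_nat (fact n) * (\<Prod>i<n. fact i * fact (Suc i))) * (of_nat (Suc n) * (fact n * fact (Suc n)) :: complex)"
    by (simp add: algebra_simps)
  also have "\<dots> = (\<Prod>j<n. (of_nat (fact (j+1)))\<^sup>2) * (of_nat (fact (Suc n)))\<^sup>2"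
    unfolding Suc by (simp add: power2_eq_square algebra_simps)
  finally show ?case by simp
qed

lemma XP_expand:
  fixes T :: "complex mat"
  assumes T: "T \<in> carrier_mat N N" and TS: "T * Matrix.mat N N (\<lambda>(r,k). Sm a r k) = 1\<^sub>m N" and k: "k < N"
  shows "[:-a,1:]^k = (\<Sum>r<N. Polynomial.smult (T $$ (k,r)) (P r))"
proof -
  have "(\<Sum>r<N. Polynomial.smult (T $$ (k,r)) (P r))
      = (\<Sum>r<N. \<Sum>l<N. Polynomial.smult (T $$ (k,r) * Sm a r l) ([:-a,1:]^l))"
    by (intro sum.cong refl) (simp add: P_taylor[of _ N a] smult_sum_right)
  also have "\<dots> = (\<Sum>l<N. Polynomial.smult (\<Sum>r<N. T $$ (k,r) * Sm a r l) ([:-a,1:]^l))"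
    by (subst sum.swap) (simp add: smult_sum)
  also have "\<dots> = (\<Sum>l<N. Polynomial.smult (if k = l then 1 else 0) ([:-a,1:]^l))"
  proof (intro sum.cong refl)
    fix l assume "l \<in> {..<N}"
    then have l: "l < N" by simp
    have "(\<Sum>r<N. T $$ (k,r) * Sm a r l) = (T * Matrix.mat N N (\<lambda>(r,k). Sm a r k)) $$ (k,l)"
      by (subst mult_entry[OF T _ k l]) (auto intro!: sum.cong simp: l)
    also have "\<dots> = (if k = l then 1 else 0)" using TS k l by simp
    finally show "Polynomial.smult (\<Sum>r<N. T $$ (k,r) * Sm a r l) ([:-a,1:]^l) = Polynomial.smult (if k = l then 1 else 0) ([:-a,1:]^l)" by simp
  qed
  also have "\<dots> = (\<Sum>l<N. if k = l then [:-a,1:]^l else 0)" by (intro sum.cong) auto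
  also have "\<dots> = [:-a,1:]^k" using k by simp
  finally show ?thesis by simp
qed

lemma sign_fact_prod:
  "(\<Prod>i<\<alpha>. (-1)^(n+i) * fact (n+i)) * (\<Prod>j<\<alpha>. (-1)^j / fact j)
    = (-1)^(n*\<alpha>) * (\<Prod>j<\<alpha>. of_nat (fact (n+j)) / of_nat (fact j) :: complex)"
proof -
  have "(\<Prod>i<\<alpha>. (-1)^(n+i) * fact (n+i)) * (\<Prod>j<\<alpha>. (-1)^j / fact j)
     = (\<Prod>i<\<alpha>. (-1)^n * (fact (n+i) / fact i) :: complex)"
    unfolding prod.distrib[symmetric]
  proof (intro prod.cong refl)
    fix i
    have "((-1::complex)^(n+i)) * (-1)^i = (-1)^n * ((-1)^i * (-1)^i)" by (simp add: power_add)
    also have "(-1::complex)^i * (-1)^i = 1" by (simp flip: power_add mult_2 add: power_mult)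
    finally have e: "((-1::complex)^(n+i)) * (-1)^i = (-1)^n" by simp
    show "(-1)^(n+i) * fact (n+i) * ((-1)^i / fact i) = (-1::complex)^n * (fact (n+i) / fact i)"
      using e by (simp add: field_simps)
  qed
  also have "\<dots> = (-1)^(n*\<alpha>) * (\<Prod>j<\<alpha>. of_nat (fact (n+j)) / of_nat (fact j) :: complex)"
    by (simp add: prod.distrib power_mult prod_dividef)
  finally show ?thesis .
qed

theorem alg_main:
  "of_nat (fact n) * Determinant.det (Matrix.mat n n (\<lambda>(i,j). mu a \<alpha> (i+j)))
   = (-1) ^ (n * \<alpha>) * (\<Prod>j<n. (of_nat (fact (j + 1)))\<^sup>2)
    * (\<Prod>j<\<alpha>. of_nat (fact (n + j)) / of_nat (fact j))
    * Determinant.det (Matrix.mat \<alpha> \<alpha> (\<lambda>(i, j). laguerre (j + 1) (int n + int i - int j) a))"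
proof -
  define w where "w = [:a,-1:]^\<alpha>"
  define Xa where "Xa = [:-a,1:]"
  define N where "N = n + \<alpha>"
  define h :: "nat \<Rightarrow> complex" where "h i = fact i * fact (Suc i)" for i
  define A where "A = Matrix.mat n n (\<lambda>(i,j). mu a \<alpha> (i+j))"
  define Cm where "Cm = Matrix.mat n n (\<lambda>(i,m). coeff (P i) m)"
  define Dm where "Dm = Matrix.mat n n (\<lambda>(m,j). coeff (Xa^j) m)"
  define G where "G = Matrix.mat n n (\<lambda>(i,j). ell (P i * Xa^(j+\<alpha>)))"
  have Ac: "A \<in> carrier_mat n n" "Cm \<in> carrier_mat n n" "Dm \<in> carrier_mat n n"
    by (auto simp: A_def Cm_def Dm_def)
  have dCm: "Determinant.det Cm = 1"
    unfolding Cm_def by (rule det_coeff_mat) (auto simp: degree_P coeff_P_top)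
  have degXa: "degree (Xa^j) = j" "coeff (Xa^j) j = 1" for j
    by (auto simp: Xa_def degree_linear_power coeff_linear_power)
  have dDm: "Determinant.det Dm = 1"
    unfolding Dm_def by (rule det_coeff_mat_T) (auto simp: degXa)
  have A_eq: "A = Matrix.mat n n (\<lambda>(m,j). ell (monom 1 m * (monom 1 j * w)))"
    by (rule eq_matI) (auto simp: A_def mu_def w_def mult_monom mult.assoc[symmetric])
  have CA: "Cm * A = Matrix.mat n n (\<lambda>(i,m). ell ((P i * w) * monom 1 m))"
  proof -
    have "Cm * A = Matrix.mat n n (\<lambda>(i,j). ell (P i * (monom 1 j * w)))"
      unfolding Cm_def A_eq by (rule left_transform) (meson degree_P le_less_trans)
    also have "\<dots> = Matrix.mat n n (\<lambda>(i,m). ell ((P i * w) * monom 1 m))"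
      by (rule eq_matI) (auto simp: ac_simps)
    finally show ?thesis .
  qed
  have CAD: "Cm * A * Dm = Matrix.mat n n (\<lambda>(i,j). ell ((P i * w) * Xa^j))"
    unfolding CA Dm_def by (rule right_transform) (simp add: degXa)
  have dA: "Determinant.det A = Determinant.det (Matrix.mat n n (\<lambda>(i,j). ell ((P i * w) * Xa^j)))"
    unfolding CAD[symmetric] using Ac dCm dDm
    by (simp add: det_mult[of _ n] mult_carrier_mat)
  have w_eq: "w = Polynomial.smult ((-1)^\<alpha>) (Xa^\<alpha>)"
  proof -
    have "[:a,-1:] = Polynomial.smult (-1) Xa" by (simp add: Xa_def)
    then show ?thesis unfolding w_def by (simp only: smult_power)
  qed
  have "Matrix.mat n n (\<lambda>(i,j). ell ((P i * w) * Xa^j)) = Matrix.mat n n (\<lambda>(i,j). (\<lambda>_. (-1)^\<alpha>) i * (\<lambda>_. 1) j * ell (P i * Xa^(j+\<alpha>)))"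
    by (rule eq_matI) (auto simp: w_eq ell_smult mult_smult_left mult_smult_right power_add ac_simps)
  moreover note det_scale[of n "\<lambda>_. (-1)^\<alpha>" "\<lambda>_. 1" "\<lambda>i j. ell (P i * Xa^(j+\<alpha>))"]
  ultimately have dA2: "Determinant.det A = (-1)^(\<alpha>*n) * Determinant.det G"
    unfolding dA G_def by (simp add: power_mult)
  define S where "S = Matrix.mat N N (\<lambda>(r,k). Sm a r k)"
  have Sc: "S \<in> carrier_mat N N" by (simp add: S_def)
  have dS: "Determinant.det S = 1"
  proof -
    have "Determinant.det S = prod_list (diag_mat S)"
    proof (rule det_lower_triangular[of N])
      fix i j :: nat assume "i < j" "j < N"
      then show "S $$ (i,j) = 0" by (simp add: S_def Sm_def)
    qed (rule Sc)
    also have "\<dots> = 1" by (simp add: prod_list_diag_prod S_def Sm_diag)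
    finally show ?thesis .
  qed
  obtain T where Tc: "T \<in> carrier_mat N N" and TS: "T * S = 1\<^sub>m N"
  proof -
    have "S \<in> Units (ring_mat TYPE(complex) N undefined)"
      by (rule det_non_zero_imp_unit[OF Sc]) (simp add: dS)
    then show ?thesis using that unfolding Units_def ring_mat_def by auto
  qed
  have Gent: "ell (P i * Xa^(j+\<alpha>)) = h i * 1 * T $$ (j+\<alpha>, i)" if i: "i < n" and j: "j < n" for i j
  proof -
    have jN: "j + \<alpha> < N" using j by (simp add: N_def)
    have "Xa^(j+\<alpha>) = (\<Sum>r<N. Polynomial.smult (T $$ (j+\<alpha>,r)) (P r))"
      unfolding Xa_def by (rule XP_expand[OF Tc TS[unfolded S_def] jN])
    then have "ell (P i * Xa^(j+\<alpha>)) = (\<Sum>r<N. T $$ (j+\<alpha>,r) * ell (P i * P r))"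
      by (simp add: sum_distrib_left ell_sum ell_smult mult_smult_right)
    also have "\<dots> = (\<Sum>r<N. if r = i then T $$ (j+\<alpha>,i) * h i else 0)"
      by (intro sum.cong refl) (auto simp: orth h_def)
    also have "\<dots> = h i * 1 * T $$ (j+\<alpha>, i)" using i by (simp add: N_def)
    finally show ?thesis .
  qed
  have "G = Matrix.mat n n (\<lambda>(i,j). h i * (\<lambda>_. 1) j * (\<lambda>i j. T $$ (j+\<alpha>, i)) i j)"
    by (rule eq_matI) (auto simp: G_def Gent)
  moreover note det_scale[of n h "\<lambda>_. 1" "\<lambda>i j. T $$ (j+\<alpha>, i)"]
  ultimately have dG: "Determinant.det G = (\<Prod>i<n. h i) * Determinant.det (Matrix.mat n n (\<lambda>(i,j). T $$ (j+\<alpha>, i)))"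
    by simp
  have tr: "Matrix.mat n n (\<lambda>(i,j). T $$ (j+\<alpha>, i)) = transpose_mat (Matrix.mat n n (\<lambda>(i,j). T $$ (i+\<alpha>, j)))"
    by (rule eq_matI) auto
  have dTr: "Determinant.det (Matrix.mat n n (\<lambda>(i,j). T $$ (j+\<alpha>, i))) = Determinant.det (Matrix.mat n n (\<lambda>(i,j). T $$ (i+\<alpha>, j)))"
    unfolding tr by (rule det_transpose[of _ n]) auto
  have jac: "Determinant.det (Matrix.mat n n (\<lambda>(i,j). T $$ (i+\<alpha>, j)))
       = (-1)^(n*\<alpha>) * Determinant.det (Matrix.mat \<alpha> \<alpha> (\<lambda>(i,j). S $$ (n+i, j)))"
    by (rule jacobi_block[OF Sc[unfolded N_def] Tc[unfolded N_def] TS[unfolded N_def] dS])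
  have SB: "Matrix.mat \<alpha> \<alpha> (\<lambda>(i,j). S $$ (n+i, j)) = Matrix.mat \<alpha> \<alpha> (\<lambda>(i,j).
      (\<lambda>i. (-1)^(n+i) * fact (n+i)) i * (\<lambda>j. (-1)^j / fact j) j * (\<lambda>i j. laguerre (j + 1) (int n + int i - int j) a) i j)"
    by (rule eq_matI) (auto simp: S_def N_def Sm_laguerre)
  have dSB: "Determinant.det (Matrix.mat \<alpha> \<alpha> (\<lambda>(i,j). S $$ (n+i, j)))
     = (-1)^(n*\<alpha>) * (\<Prod>j<\<alpha>. of_nat (fact (n+j)) / of_nat (fact j))
       * Determinant.det (Matrix.mat \<alpha> \<alpha> (\<lambda>(i, j). laguerre (j + 1) (int n + int i - int j) a))"
    unfolding SB det_scale[of \<alpha> "\<lambda>i. (-1)^(n+i) * fact (n+i)" "\<lambda>j. (-1)^j / fact j" "\<lambda>i j. laguerre (j + 1) (int n + int i - int j) a"] sign_fact_prod by simp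
  have "of_nat (fact n) * Determinant.det A
     = (-1)^(\<alpha>*n) * (-1)^(n*\<alpha>) * (-1)^(n*\<alpha>) * (of_nat (fact n) * (\<Prod>i<n. h i))
       * (\<Prod>j<\<alpha>. of_nat (fact (n+j)) / of_nat (fact j))
       * Determinant.det (Matrix.mat \<alpha> \<alpha> (\<lambda>(i, j). laguerre (j + 1) (int n + int i - int j) a))"
    unfolding dA2 dG dTr jac dSB by (simp add: ac_simps)
  also have "(-1::complex)^(\<alpha>*n) * (-1)^(n*\<alpha>) = 1"
    by (simp only: mult.commute[of \<alpha> n] power_mult_distrib[symmetric]) simp
  also have "of_nat (fact n) * (\<Prod>i<n. h i) = (\<Prod>j<n. (of_nat (fact (j+1)))\<^sup>2 :: complex)"
    unfolding h_def by (rule fact_prod_sq)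
  finally show ?thesis unfolding A_def by simp
qed



lemma psf_lborel: "product_sigma_finite (\<lambda>_::nat. lborel :: real measure)"
  unfolding product_sigma_finite_def by (simp add: lborel.sigma_finite_measure_axioms)

lemma my_power_times_exp_Icc:
  assumes [arith]: "0 \<le> a"
  shows "(\<integral>\<^sup>+x. ennreal (x^k * exp (-x)) * indicator {0 .. a} x \<partial>lborel) =
    (1 - (\<Sum>n\<le>k. (a^n * exp (-a)) / fact n)) * fact k" (is "?I = _")
proof -
  let ?f = "\<lambda>k x. x^k * exp (-x) / fact k"
  let ?F = "\<lambda>k x. - (\<Sum>n\<le>k. (x^n * exp (-x)) / fact n)"
  have "?I * (inverse (real_of_nat (fact k))) =
      (\<integral>\<^sup>+x. ennreal (x^k * exp (-x)) * indicator {0 .. a} x * (inverse (real_of_nat (fact k))) \<partial>lborel)"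
    by (intro nn_integral_multc[symmetric]) auto
  also have "\<dots> = (\<integral>\<^sup>+x. ennreal (?f k x) * indicator {0 .. a} x \<partial>lborel)"
    by (intro nn_integral_cong)
       (simp add: field_simps ennreal_mult'[symmetric] indicator_mult_ennreal)
  also have "\<dots> = ennreal (?F k a - ?F k 0)"
  proof (rule nn_integral_FTC_Icc)
    fix x assume "x \<in> {0..a}"
    show "DERIV (?F k) x :> ?f k x"
    proof(induction k)
      case 0 show ?case by (auto intro!: derivative_eq_intros)
    next
      case (Suc k)
      have "DERIV (\<lambda>x. ?F k x - (x^Suc k * exp (-x)) / fact (Suc k)) x :>
        ?f k x - ((real (Suc k) - x) * x ^ k * exp (- x)) / (fact (Suc k))"
        by (intro DERIV_diff Suc)
           (auto intro!: derivative_eq_intros simp del: fact_Suc power_Suc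
                 simp add: field_simps power_Suc[symmetric])
      also have "(\<lambda>x. ?F k x - (x^Suc k * exp (-x)) / fact (Suc k)) = ?F (Suc k)"
        by simp
      also have "?f k x - ((real (Suc k) - x) * x ^ k * exp (- x)) / (fact (Suc k)) = ?f (Suc k) x"
        by (auto simp: field_simps simp del: fact_Suc)
           (simp_all add: of_nat_Suc field_simps)
      finally show ?case .
    qed
  qed auto
  also have "\<dots> = ennreal (1 - (\<Sum>n\<le>k. (a^n * exp (-a)) / fact n))"
    by (auto simp: power_0_left if_distrib[where f="\<lambda>x. x / a" for a] sum.If_cases)
  also have "\<dots> = ennreal ((1 - (\<Sum>n\<le>k. (a^n * exp (-a)) / fact n)) * fact k) * ennreal (inverse (fact k))"
    by (subst ennreal_mult''[symmetric]) (auto intro!: arg_cong[where f=ennreal])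
  finally show ?thesis
    by (auto simp add: mult_right_ennreal_cancel le_less)
qed

lemma my_power_times_exp_Ici:
  shows "(\<integral>\<^sup>+x. ennreal (x^k * exp (-x)) * indicator {0 ..} x \<partial>lborel) = real_of_nat (fact k)"
proof (rule LIMSEQ_unique)
  let ?X = "\<lambda>n. \<integral>\<^sup>+ x. ennreal (x^k * exp (-x)) * indicator {0 .. real n} x \<partial>lborel"
  show "?X \<longlonglongrightarrow> (\<integral>\<^sup>+x. ennreal (x^k * exp (-x)) * indicator {0 ..} x \<partial>lborel)"
    apply (intro nn_integral_LIMSEQ)
    apply (auto simp: incseq_def le_fun_def eventually_sequentially
                split: split_indicator intro!: tendsto_eventually)
    apply (metis nat_ceiling_le_eq)
    done

  have "((\<lambda>x::real. (1 - (\<Sum>n\<le>k. (x ^ n / exp x) / (fact n))) * fact k) \<longlongrightarrow>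
        (1 - (\<Sum>n\<le>k. 0 / (fact n))) * fact k) at_top"
    by (intro tendsto_intros tendsto_power_div_exp_0) simp
  then show "?X \<longlonglongrightarrow> real_of_nat (fact k)"
    by (subst my_power_times_exp_Icc)
       (auto simp: exp_minus field_simps intro!: filterlim_compose[OF _ filterlim_real_sequentially])
qed

lemma hbi_exp_pow: "has_bochner_integral lborel (\<lambda>t::real. indicator {0..} t * (exp (-t) * t ^ k)) (fact k)"
proof (rule has_bochner_integral_nn_integral)
  show "(\<lambda>t::real. indicator {0..} t * (exp (-t) * t ^ k)) \<in> borel_measurable lborel" by measurable
  show "AE x in lborel. 0 \<le> indicator {0..} x * (exp (- x) * (x::real) ^ k)"
    by (intro AE_I2) (simp add: indicator_def)
  show "(0::real) \<le> fact k" by simp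
  have "(\<integral>\<^sup>+ x. ennreal (indicator {0..} x * (exp (- x) * (x::real) ^ k)) \<partial>lborel)
      = (\<integral>\<^sup>+x. ennreal (x^k * exp (-x)) * indicator {0 ..} x \<partial>lborel)"
    by (intro nn_integral_cong) (auto simp: indicator_def mult.commute)
  also have "\<dots> = ennreal (fact k)" using my_power_times_exp_Ici[of k] by simp
  finally show "(\<integral>\<^sup>+ x. ennreal (indicator {0..} x * (exp (- x) * (x::real) ^ k)) \<partial>lborel) = ennreal (fact k)" .
qed

lemma hbi_ell: "has_bochner_integral lborel
   (\<lambda>t::real. indicator {0..} t *\<^sub>R (complex_of_real (exp (- t) * t) * poly q (complex_of_real t))) (ell q)"
proof -
  have "has_bochner_integral lborel
     (\<lambda>t::real. \<Sum>k\<le>degree q. complex_of_real (indicator {0..} t * (exp (-t) * t ^ Suc k)) * coeff q k)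
     (\<Sum>k\<le>degree q. complex_of_real (fact (Suc k)) * coeff q k)"
    by (intro has_bochner_integral_sum has_bochner_integral_mult_left has_bochner_integral_of_real hbi_exp_pow)
  moreover have "(\<Sum>k\<le>degree q. complex_of_real (fact (Suc k)) * coeff q k) = ell q"
    unfolding ell_def by (intro sum.cong refl) (simp add: mult.commute)
  moreover have "(\<lambda>t::real. \<Sum>k\<le>degree q. complex_of_real (indicator {0..} t * (exp (-t) * t ^ Suc k)) * coeff q k)
     = (\<lambda>t::real. indicator {0..} t *\<^sub>R (complex_of_real (exp (- t) * t) * poly q (complex_of_real t)))"
    by (rule ext) (simp add: poly_altdef scaleR_conv_of_real sum_distrib_left sum_distrib_right algebra_simps)
  ultimately show ?thesis by simp
qed

lemma Delta_perm: "complex_of_real (Delta n y) = (\<Sum>\<sigma>\<in>{p. p permutes {0..<n}}. of_int (sign \<sigma>) * (\<Prod>k<n. complex_of_real (y k) ^ \<sigma> k))"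
proof -
  have "Delta n y = (\<Sum>\<sigma>\<in>{p. p permutes {0..<n}}. of_int (sign \<sigma>) * (\<Prod>k\<in>{0..<n}. y k ^ \<sigma> k))"
    using vandermonde[of n y] det_entries[of n "\<lambda>k i. y k ^ i"] by simp
  then show ?thesis by (simp add: atLeast0LessThan)
qed

lemma ind_prod: "indicator {y. \<forall>j<(n::nat). 0 \<le> y j} y = (\<Prod>k<n. indicator {0..} (y k) :: real)"
proof (cases "\<forall>j<n. 0 \<le> y j")
  case True then show ?thesis by (simp add: indicator_def)
next
  case False
  then obtain j where "j < n" "\<not> 0 \<le> y j" by auto
  then have "(\<Prod>k<n. indicator {0..} (y k) :: real) = 0"
    by (intro prod_zero) (auto simp: indicator_def)
  then show ?thesis using False by (simp add: indicator_def)
qed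

lemma pointwise:
  fixes y :: "nat \<Rightarrow> real"
  shows "indicator {y. \<forall>j<n. 0 \<le> y j} y *\<^sub>R ((\<Prod>j<n. complex_of_real (exp (- y j) * y j) * (a - complex_of_real (y j)) ^ \<alpha>)
        * complex_of_real ((Delta n y)\<^sup>2))
    = (\<Sum>\<sigma>\<in>{p. p permutes {0..<n}}. \<Sum>\<tau>\<in>{p. p permutes {0..<n}}. of_int (sign \<sigma>) * of_int (sign \<tau>) *
        (\<Prod>k<n. indicator {0..} (y k) *\<^sub>R (complex_of_real (exp (- y k) * y k) *
            poly (monom 1 (\<sigma> k + \<tau> k) * [:a,-1:]^\<alpha>) (complex_of_real (y k)))))"
proof -
  define I where "I = (\<Prod>k<n. complex_of_real (indicator {0..} (y k)))"
  define E where "E = (\<Prod>j<n. complex_of_real (exp (- y j) * y j) * (a - complex_of_real (y j)) ^ \<alpha>)"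
  define V where "V \<sigma> = (\<Prod>k<n. complex_of_real (y k) ^ \<sigma> k)" for \<sigma> :: "nat \<Rightarrow> nat"
  have pa: "poly (monom 1 m * [:a,-1:]^\<alpha>) x = x^m * (a - x)^\<alpha>" for m x
    by (simp add: poly_monom)
  have rhs: "(\<Prod>k<n. indicator {0..} (y k) *\<^sub>R (complex_of_real (exp (- y k) * y k) *
            poly (monom 1 (\<sigma> k + \<tau> k) * [:a,-1:]^\<alpha>) (complex_of_real (y k)))) = I * E * (V \<sigma> * V \<tau>)" for \<sigma> \<tau>
    unfolding I_def E_def V_def pa scaleR_conv_of_real prod.distrib[symmetric]
    by (intro prod.cong refl) (simp add: power_add algebra_simps)
  have lhs: "complex_of_real ((Delta n y)\<^sup>2) = (\<Sum>\<sigma>\<in>{p. p permutes {0..<n}}. \<Sum>\<tau>\<in>{p. p permutes {0..<n}}. of_int (sign \<sigma>) * of_int (sign \<tau>) * (V \<sigma> * V \<tau>))"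
  proof -
    have d: "complex_of_real (Delta n y) = (\<Sum>\<sigma>\<in>{p. p permutes {0..<n}}. of_int (sign \<sigma>) * V \<sigma>)"
      unfolding V_def by (rule Delta_perm)
    show ?thesis
      apply (simp only: of_real_power)
      apply (subst d)
      apply (simp only: power2_eq_square sum_product)
      apply (simp add: algebra_simps)
      done
  qed
  have ind: "indicator {y. \<forall>j<n. 0 \<le> y j} y *\<^sub>R z = I * z" for z
    unfolding ind_prod I_def scaleR_conv_of_real by simp
  show ?thesis unfolding ind lhs rhs E_def[symmetric] by (simp add: sum_distrib_left algebra_simps)
qed

lemma R_expand:
  "R_int n a \<alpha> = (\<Sum>\<sigma>\<in>{p. p permutes {0..<n}}. \<Sum>\<tau>\<in>{p. p permutes {0..<n}}.
      of_int (sign \<sigma>) * of_int (sign \<tau>) * (\<Prod>k\<in>{0..<n}. mu a \<alpha> (\<sigma> k + \<tau> k)))"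
proof -
  interpret psf: product_sigma_finite "\<lambda>_::nat. lborel :: real measure" by (rule psf_lborel)
  define M where "M = PiM {..<n} (\<lambda>_::nat. lborel :: real measure)"
  define \<phi> where "\<phi> m t = indicator {0..} t *\<^sub>R (complex_of_real (exp (- t) * t) *
      poly (monom 1 m * [:a,-1:]^\<alpha>) (complex_of_real t))" for m and t :: real
  have h\<phi>: "has_bochner_integral lborel (\<phi> m) (mu a \<alpha> m)" for m
    unfolding \<phi>_def mu_def by (rule hbi_ell)
  have i\<phi>: "integrable lborel (\<phi> m)" for m using h\<phi>[of m] by (auto simp: has_bochner_integral_iff)
  have iprod: "integrable M (\<lambda>y. \<Prod>k\<in>{..<n}. \<phi> (\<sigma> k + \<tau> k) (y k))" for \<sigma> \<tau> :: "nat \<Rightarrow> nat"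
    unfolding M_def by (rule psf.product_integrable_prod) (auto simp: i\<phi>)
  have intprod: "integral\<^sup>L M (\<lambda>y. \<Prod>k\<in>{..<n}. \<phi> (\<sigma> k + \<tau> k) (y k)) = (\<Prod>k\<in>{..<n}. mu a \<alpha> (\<sigma> k + \<tau> k))" for \<sigma> \<tau> :: "nat \<Rightarrow> nat"
    unfolding M_def by (subst psf.product_integral_prod) (auto simp: i\<phi> has_bochner_integral_integral_eq[OF h\<phi>])
  have "R_int n a \<alpha> = integral\<^sup>L M (\<lambda>y. (\<Sum>\<sigma>\<in>{p. p permutes {0..<n}}. \<Sum>\<tau>\<in>{p. p permutes {0..<n}}.
      of_int (sign \<sigma>) * of_int (sign \<tau>) * (\<Prod>k\<in>{..<n}. \<phi> (\<sigma> k + \<tau> k) (y k))))"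
    unfolding R_int_def set_lebesgue_integral_def M_def[symmetric]
  proof (rule Bochner_Integration.integral_cong[OF refl])
    fix y assume y: "y \<in> space M"
    have "indicator {y \<in> space M. \<forall>j<n. 0 \<le> y j} y = (indicator {y. \<forall>j<n. 0 \<le> y j} y :: real)"
      using y by (simp add: indicator_def)
    then show "indicator {y \<in> space M. \<forall>j<n. 0 \<le> y j} y *\<^sub>R
         ((\<Prod>j<n. complex_of_real (exp (- y j) * y j) * (a - complex_of_real (y j)) ^ \<alpha>) *
          complex_of_real ((Delta n y)\<^sup>2)) =
         (\<Sum>\<sigma>\<in>{p. p permutes {0..<n}}. \<Sum>\<tau>\<in>{p. p permutes {0..<n}}.
            of_int (sign \<sigma>) * of_int (sign \<tau>) * (\<Prod>k\<in>{..<n}. \<phi> (\<sigma> k + \<tau> k) (y k)))"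
      using pointwise[of n y a \<alpha>] by (simp add: \<phi>_def)
  qed
  also have "\<dots> = (\<Sum>\<sigma>\<in>{p. p permutes {0..<n}}. \<Sum>\<tau>\<in>{p. p permutes {0..<n}}.
      of_int (sign \<sigma>) * of_int (sign \<tau>) * integral\<^sup>L M (\<lambda>y. \<Prod>k\<in>{..<n}. \<phi> (\<sigma> k + \<tau> k) (y k)))"
    by (simp add: integral_sum iprod)
  also have "\<dots> = (\<Sum>\<sigma>\<in>{p. p permutes {0..<n}}. \<Sum>\<tau>\<in>{p. p permutes {0..<n}}.
      of_int (sign \<sigma>) * of_int (sign \<tau>) * (\<Prod>k\<in>{0..<n}. mu a \<alpha> (\<sigma> k + \<tau> k)))"
    by (simp add: intprod atLeast0LessThan)
  finally show ?thesis .
qed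

theorem mainTheorem11:
  fixes n \<alpha> :: nat and a :: complex
  assumes "n \<ge> 1" and "\<alpha> \<ge> 1"
  shows "R_int n a \<alpha> =
    (-1) ^ (n * \<alpha>) * (\<Prod>j<n. (of_nat (fact (j + 1)))\<^sup>2)
    * (\<Prod>j<\<alpha>. of_nat (fact (n + j)) / of_nat (fact j))
    * Determinant.det (mat \<alpha> \<alpha> (\<lambda>(i, j). laguerre (j + 1) (int n + int i - int j) a))"
  unfolding R_expand heine alg_main ..

end
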